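(* Let $\ell$ be a positive odd integer with at most $t$ distinct prime factors. Suppose there exist $t+1$ primes $p_1<p_2<\cdots<p_{t+1}$ with $p_1\ge 3$ such that any two of $p_1-1,\dots,p_{t+1}-1$ have no common odd prime factor. Then for every integer $n$ with $p_{t+1}-1\le n\le 2p_1-2$, $\Omega_\ell(n)$ is not a powerful number.
   Context: A positive integer $a$ is called a powerful number if for every prime $p$, $p\mid a$ implies $p^2\mid a$. $\Omega_\ell(n)=\prod_{a=1}^{n}(a^\ell+1)$. *)

theory Defs
  imports "HOL-Computational_Algebra.Primes"
begin

definition powerful :: "nat \<Rightarrow> bool" where
  "powerful a \<longleftrightarrow> a > 0 \<and> (\<forall>p. prime p \<longrightarrow> p dvd a \<longrightarrow> p^2 dvd a)"

definition Omega :: "nat \<Rightarrow> nat \<Rightarrow> nat" where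
  "Omega l n = (\<Prod>a=1..n. a^l + 1)"

end

theory Submission
  imports Defs "HOL-Number_Theory.Number_Theory"
begin

lemma binom_mod: "\<exists>K::int. (1+x)^l = 1 + int l * x + x^2*K"
proof (induction l)
  case 0 then show ?case by (auto intro: exI[of _ 0])
next
  case (Suc l)
  then obtain K where K: "(1+x)^l = 1 + int l * x + x^2*K" by blast
  have "(1+x)^Suc l = (1 + int l * x + x^2*K) * (1+x)" using K by simp
  also have "\<dots> = 1 + int (Suc l) * x + x^2 * (int l + K + K*x)"
    by (simp add: algebra_simps power2_eq_square)
  finally show ?case by blast
qed

lemma not_sq_dvd:
  fixes P l :: nat
  assumes "prime P" "odd l" "\<not> P dvd l"
  shows "\<not> P^2 dvd ((P-1)^l + 1)"
proof
  assume h: "P^2 dvd ((P-1)^l + 1)"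
  have P1: "P \<ge> 1" using assms(1) prime_ge_1_nat by blast
  obtain K where K: "(1 + (- int P))^l = 1 + int l * (- int P) + (- int P)^2 * K"
    using binom_mod by blast
  have "int ((P-1)^l + 1) = (int P - 1)^l + 1" using P1 by (simp add: of_nat_diff)
  also have "(int P - 1)^l = - ((1 + (- int P))^l)"
  proof -
    have "(int P - 1) = - (1 + (- int P))" by simp
    hence "(int P - 1)^l = (- (1 + (- int P)))^l" by simp
    also have "\<dots> = - ((1 + (- int P))^l)" by (rule power_minus_odd[OF assms(2)])
    finally show ?thesis .
  qed
  finally have e: "int ((P-1)^l + 1) = int l * int P - int P ^2 * K" using K by (simp add: algebra_simps)
  have "int P ^2 dvd int ((P-1)^l + 1)" using h by (metis of_nat_dvd_iff of_nat_power)
  hence "int P^2 dvd int l * int P - int P ^2 * K" using e by simp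
  moreover have "int l * int P = (int l * int P - int P ^2 * K) + int P^2*K" by simp
  ultimately have "int P^2 dvd int l * int P" by (metis dvd_add dvd_triv_left)
  hence "int P * int P dvd int l * int P" by (simp add: power2_eq_square)
  moreover have "int P \<noteq> 0" using assms(1) by simp
  ultimately have "int P dvd int l" by simp
  thus False using assms(3) by simp
qed

lemma unique_root:
  fixes P l a :: nat
  assumes "prime P" "P \<ge> 3" "gcd l (P-1) = 1" "l > 0" "a \<ge> 1" "a \<le> 2*P-2" "P dvd a^l+1"
  shows "a = P - 1"
proof -
  have nd: "\<not> P dvd a"
  proof
    assume "P dvd a"
    then have "P dvd a^l" using assms(4) by (metis dvd_power dvd_trans)
    then have "P dvd 1" using assms(7) by (metis dvd_add_right_iff)
    then show False using assms(1) by simp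
  qed
  have ferm: "[a^(P-1) = 1] (mod P)" using assms(1) nd by (rule fermat_theorem)
  obtain u v where uv: "l*u = (P-1)*v + 1" using bezout_nat[of l "P-1"] assms(3,4) by auto
  have "odd P" using assms(1,2) prime_odd_nat by auto
  hence "even ((P-1)*v)" by simp
  hence "odd (l*u)" using uv by simp
  hence ou: "odd u" by simp
  define y where "y = int a"
  have "int P dvd y^l + 1" using assms(7) unfolding y_def by (metis of_nat_dvd_iff of_nat_1 of_nat_add of_nat_power)
  hence c1: "[y^l = -1] (mod int P)" by (simp add: cong_iff_dvd_diff)
  have "[(y^l)^u = (-1)^u] (mod int P)" by (rule cong_pow[OF c1])
  hence c2: "[y^(l*u) = -1] (mod int P)" using ou by (simp add: power_mult)
  have f: "[y^(P-1) = 1] (mod int P)" using ferm unfolding y_def by (metis cong_int_iff of_nat_1 of_nat_power)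
  have e: "y^(l*u) = (y^(P-1))^v * y" using uv by (simp add: power_add power_mult)
  have "[(y^(P-1))^v * y = 1^v * y] (mod int P)" by (intro cong_mult cong_pow f cong_refl)
  hence "[y^(l*u) = y] (mod int P)" using e by simp
  hence "[y = -1] (mod int P)" using c2 by (meson cong_sym cong_trans)
  hence "int P dvd y + 1" by (simp add: cong_iff_dvd_diff)
  hence d: "P dvd a + 1" unfolding y_def by (metis of_nat_dvd_iff of_nat_1 of_nat_add)
  then obtain k where k: "a + 1 = P * k" by blast
  have "k \<noteq> 0" using k by (metis add_eq_0_iff_both_eq_0 mult_0_right one_neq_zero)
  moreover have "k < 2" proof (rule ccontr)
    assume "\<not> k < 2" hence "P * k \<ge> P * 2" by simp
    thus False using k assms(6) assms(2) by linarith
  qed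
  ultimately have "k = 1" by simp
  thus ?thesis using k by simp
qed

lemma good_prime:
  fixes P l n :: nat
  assumes "prime P" "P \<ge> 3" "gcd l (P-1) = 1" "l > 0" "odd l" "\<not> P dvd l"
    "P - 1 \<le> n" "n \<le> 2*P-2"
  shows "\<not> powerful (Omega l n)"
proof
  assume pw: "powerful (Omega l n)"
  define S where "S = {1..n}"
  define R where "R = (\<Prod>a\<in>S-{P-1}. a^l+1)"
  have mem: "P - 1 \<in> S" using assms(2,7) unfolding S_def by auto
  have om: "Omega l n = ((P-1)^l+1) * R"
    unfolding Omega_def R_def S_def[symmetric] using prod.remove[OF _ mem, of "\<lambda>a. a^l+1"] by (simp add: S_def)
  have "[int P - 1 = -1] (mod int P)" by (simp add: cong_iff_dvd_diff)
  hence "[(int P - 1)^l = (-1)^l] (mod int P)" by (rule cong_pow)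
  hence "[(int P - 1)^l = -1] (mod int P)" using assms(5) by simp
  hence "int P dvd (int P - 1)^l + 1" by (simp add: cong_iff_dvd_diff)
  moreover have "int ((P-1)^l+1) = (int P - 1)^l + 1" using assms(2) by (simp add: of_nat_diff)
  ultimately have "int P dvd int ((P-1)^l+1)" by (simp only:)
  hence "P dvd (P-1)^l+1" by (simp only: of_nat_dvd_iff)
  hence "P dvd Omega l n" unfolding om by (rule dvd_mult2)
  hence sq: "P^2 dvd ((P-1)^l+1) * R" using pw assms(1) unfolding powerful_def om by blast
  have "\<not> P dvd R"
  proof
    assume "P dvd R"
    hence "\<exists>a\<in>S - {P-1}. P dvd a^l+1"
      unfolding R_def using assms(1) prime_dvd_prod_iff[of "S - {P-1}" P] by (simp add: S_def)
    then obtain a where a: "a \<in> S - {P-1}" "P dvd a^l+1" by blast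
    have "a = P - 1"
      by (rule unique_root[OF assms(1,2,3,4)]) (use a assms(8) in \<open>auto simp: S_def\<close>)
    thus False using a by simp
  qed
  hence "coprime P R" using assms(1) by (rule prime_imp_coprime[rotated])
  hence "coprime (P^2) R" by simp
  hence "P^2 dvd (P-1)^l+1" using sq coprime_dvd_mult_left_iff by blast
  thus False using not_sq_dvd[OF assms(1,5,6)] by simp
qed

theorem lemma4:
  fixes l t :: nat and p :: "nat \<Rightarrow> nat" and n :: nat
  assumes "l > 0" and "odd l"
    and "card (prime_factors l) \<le> t"
    and "\<And>i. i \<in> {1..t+1} \<Longrightarrow> prime (p i)"
    and "\<And>i j. i \<in> {1..t+1} \<Longrightarrow> j \<in> {1..t+1} \<Longrightarrow> i < j \<Longrightarrow> p i < p j"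
    and "p 1 \<ge> 3"
    and "\<And>i j q. i \<in> {1..t+1} \<Longrightarrow> j \<in> {1..t+1} \<Longrightarrow> i \<noteq> j \<Longrightarrow>
           prime q \<Longrightarrow> odd q \<Longrightarrow> \<not> (q dvd (p i - 1) \<and> q dvd (p j - 1))"
    and "p (t+1) - 1 \<le> n" and "n \<le> 2 * p 1 - 2"
  shows "\<not> powerful (Omega l n)"
proof -
  define I where "I = {1..t+1}"
  have lo: "p 1 \<le> p i" if "i \<in> I" for i
  proof (cases "i = 1")
    case False thus ?thesis using assms(5)[of 1 i] that unfolding I_def by fastforce
  qed simp
  have hi: "p i \<le> p (t+1)" if "i \<in> I" for i
  proof (cases "i = t+1")
    case False thus ?thesis using assms(5)[of i "t+1"] that unfolding I_def by fastforce
  qed simp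
  have ge3: "p i \<ge> 3" if "i \<in> I" for i using lo[OF that] assms(6) by linarith
  have inj: "i = j" if "i \<in> I" "j \<in> I" "p i = p j" for i j
  proof (rule ccontr)
    assume "i \<noteq> j"
    hence "i < j \<or> j < i" by linarith
    thus False using assms(5)[of i j] assms(5)[of j i] that unfolding I_def by auto
  qed
  have nodvd: "\<not> p j dvd p i - 1" if "i \<in> I" "j \<in> I" for i j
  proof
    assume d: "p j dvd p i - 1"
    then obtain k where k: "p i - 1 = p j * k" by blast
    have "p i \<le> n + 1" using hi[OF that(1)] assms(8) by linarith
    moreover have "p 1 \<le> p j" using lo[OF that(2)] .
    ultimately have b: "p i - 1 < 2 * p j" using assms(9) assms(6) by linarith
    have "k \<noteq> 0" proof assume "k = 0" thus False using k ge3[OF that(1)] by simp qed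
    moreover have "k < 2"
    proof (rule ccontr)
      assume "\<not> k < 2" hence "p j * k \<ge> p j * 2" by simp
      thus False using k b by linarith
    qed
    ultimately have "k = 1" by simp
    hence e: "p i = p j + 1" using k ge3[OF that(1)] by simp
    have "odd (p j)" using assms(4) ge3[OF that(2)] prime_odd_nat that(2) unfolding I_def by auto
    hence "even (p i)" using e by simp
    moreover have "prime (p i)" using assms(4) that(1) unfolding I_def by auto
    ultimately have "p i = 2" using prime_odd_nat ge3[OF that(1)] by fastforce
    thus False using ge3[OF that(1)] by simp
  qed
  define Q where "Q i q \<longleftrightarrow> q \<in> prime_factors l \<and> (q dvd p i - 1 \<or> q = p i)" for i q
  define B where "B = {i\<in>I. \<exists>q. Q i q}"
  define f where "f i = (SOME q. Q i q)" for i
  have fQ: "Q i (f i)" if "i \<in> B" for i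
    using that unfolding B_def f_def by (auto intro: someI_ex)
  have "inj_on f B"
  proof (rule inj_onI)
    fix i j assume ij: "i \<in> B" "j \<in> B" "f i = f j"
    define q where "q = f i"
    have qi: "Q i q" and qj: "Q j q" using fQ[OF ij(1)] fQ[OF ij(2)] ij(3) unfolding q_def by simp_all
    have iI: "i \<in> I" and jI: "j \<in> I" using ij unfolding B_def by auto
    have qp: "prime q" "q dvd l" using qi unfolding Q_def by auto
    have qo: "odd q" using qp(2) assms(2) by (metis dvd_trans even_two_times_div_two dvd_triv_left)
    show "i = j"
    proof (rule ccontr)
      assume nij: "i \<noteq> j"
      consider "q dvd p i - 1" "q dvd p j - 1" | "q = p i" "q = p j"
        | "q dvd p i - 1" "q = p j" | "q = p i" "q dvd p j - 1"
        using qi qj unfolding Q_def by blast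
      thus False
      proof cases
        case 1 thus False using assms(7)[of i j q] iI jI nij qp qo unfolding I_def by auto
      next
        case 2 thus False using inj[OF iI jI] nij by simp
      next
        case 3 thus False using nodvd[OF iI jI] by simp
      next
        case 4 thus False using nodvd[OF jI iI] by simp
      qed
    qed
  qed
  moreover have "f ` B \<subseteq> prime_factors l" using fQ unfolding Q_def by auto
  ultimately have "card B \<le> card (prime_factors l)"
    by (intro card_inj_on_le) auto
  hence "card B < card I" using assms(3) unfolding I_def by simp
  moreover have "B \<subseteq> I" unfolding B_def by auto
  ultimately have "\<not> I \<subseteq> B" using card_mono[of B I] unfolding I_def by auto
  then obtain i where iI: "i \<in> I" and iB: "i \<notin> B" by blast
  define P where "P = p i"
  have Pp: "prime P" using assms(4) iI unfolding P_def I_def by auto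
  have P3: "P \<ge> 3" using ge3[OF iI] unfolding P_def .
  have noQ: "\<not> Q i q" for q using iB iI unfolding B_def by auto
  have g: "gcd l (P-1) = 1"
  proof (rule ccontr)
    assume "gcd l (P-1) \<noteq> 1"
    then obtain q where q: "prime q" "q dvd gcd l (P-1)" using prime_factor_nat by blast
    hence "q \<in> prime_factors l" "q dvd P - 1" using assms(1) by (auto simp: in_prime_factors_iff)
    thus False using noQ[of q] unfolding Q_def P_def by auto
  qed
  have nd: "\<not> P dvd l"
  proof
    assume "P dvd l"
    hence "P \<in> prime_factors l" using Pp assms(1) by (auto simp: in_prime_factors_iff)
    thus False using noQ[of P] unfolding Q_def P_def by auto
  qed
  have n1: "P - 1 \<le> n" using hi[OF iI] assms(8) unfolding P_def by linarith
  have n2: "n \<le> 2*P-2" using lo[OF iI] assms(9) unfolding P_def by linarith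
  show ?thesis by (rule good_prime[OF Pp P3 g assms(1,2) nd n1 n2])
qed

end
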